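(* Let $D$ be any distribution of $(X,A,Y)$ on $\mathcal{X}\times\{0,1\}\times\{0,1\}$ ($\mathcal{X}$ discrete), and let $\tilde D$ be its biased version with bias parameters $\beta_p,\beta_n,\nu\in(0,1)$. Let $\mathcal{H}$ be any class of classifiers $\mathcal{X}\times\{0,1\}\to\{0,1\}$, $\mathcal{H}_{\mathrm{fair,EO}}=\{f\in\mathcal{H}:TPR_0(f)=TPR_1(f)\}$ and $\widetilde{\mathcal{H}}_{\mathrm{fair,EO}}=\{f\in\mathcal{H}:\widetilde{TPR}_0(f)=\widetilde{TPR}_1(f)\}$. Then for every $h\in\mathcal{H}$, $\widetilde{TPR}_0(h)=TPR_0(h)$ and $\widetilde{TPR}_1(h)=TPR_1(h)$; hence $\mathcal{H}_{\mathrm{fair,EO}}=\widetilde{\mathcal{H}}_{\mathrm{fair,EO}}$.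
   Context: $TPR_a(f)=\Pr_D[f(X,A)=1\mid Y=1,A=a]$ and $\widetilde{TPR}_a(f)=\Pr_{\tilde D}[f(X,A)=1\mid\tilde Y=1,A=a]$. Biased distribution $\tilde D$: draw $(X,A,Y)\sim D$; points with $A=1$ are kept unchanged; points with $A=0,Y=1$ survive independently with probability $\beta_p$, points with $A=0,Y=0$ survive independently with probability $\beta_n$; each surviving point with $A=0,Y=1$ keeps label $1$ with probability $1-\nu$ and is flipped to $0$ with probability $\nu$, independently. $\tilde D$ is the distribution of the resulting $(X,A,\tilde Y)$ among surviving points. *)

theory Defs
  imports "HOL-Probability.Probability"
begin

text \<open>Conventions: a data point is (x, a, y) with the group attribute a and the
label y encoded as bool (True = 1, False = 0).\<close>

definition TPR :: "('x \<times> bool \<times> bool) pmf \<Rightarrow> ('x \<Rightarrow> bool \<Rightarrow> bool) \<Rightarrow> bool \<Rightarrow> real" where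
  "TPR D f a =
     measure_pmf.prob D {(x, a', y). f x a' \<and> y \<and> a' = a}
     / measure_pmf.prob D {(x, a', y). y \<and> a' = a}"

text \<open>One draw of the biasing process: None = the point is removed.\<close>
definition bias_step :: "real \<Rightarrow> real \<Rightarrow> real \<Rightarrow> ('x \<times> bool \<times> bool)
    \<Rightarrow> ('x \<times> bool \<times> bool) option pmf" where
  "bias_step \<beta>p \<beta>n \<nu> p = (case p of (x, a, y) \<Rightarrow>
     if a then return_pmf (Some (x, a, y))
     else if y then
       bind_pmf (bernoulli_pmf \<beta>p) (\<lambda>s. if s
          then map_pmf (\<lambda>flip. Some (x, a, \<not> flip)) (bernoulli_pmf \<nu>)
          else return_pmf None)
     else
       bind_pmf (bernoulli_pmf \<beta>n) (\<lambda>s. if s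
          then return_pmf (Some (x, a, y))
          else return_pmf None))"

definition biased :: "real \<Rightarrow> real \<Rightarrow> real \<Rightarrow> ('x \<times> bool \<times> bool) pmf
    \<Rightarrow> ('x \<times> bool \<times> bool) pmf" where
  "biased \<beta>p \<beta>n \<nu> D =
     map_pmf the (cond_pmf (bind_pmf D (bias_step \<beta>p \<beta>n \<nu>)) {z. z \<noteq> None})"

definition H_fair_EO :: "('x \<times> bool \<times> bool) pmf \<Rightarrow> ('x \<Rightarrow> bool \<Rightarrow> bool) set
    \<Rightarrow> ('x \<Rightarrow> bool \<Rightarrow> bool) set" where
  "H_fair_EO D H = {f \<in> H. TPR D f False = TPR D f True}"

end

theory Submission
  imports Defs
begin


lemma cond_measure:
  assumes "set_pmf p \<inter> s \<noteq> {}"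
  shows "measure_pmf.prob (cond_pmf p s) A = measure_pmf.prob p (s \<inter> A) / measure_pmf.prob p s"
proof -
  have "emeasure (measure_pmf p) s \<noteq> 0"
    using assms by (simp add: measure_pmf.emeasure_eq_measure measure_measure_pmf_not_zero)
  then show ?thesis
    by (simp add: cond_pmf.rep_eq[OF assms] measure_pmf.emeasure_eq_measure)
qed

lemma step_measure:
  assumes "0 \<le> \<beta>p" "\<beta>p \<le> 1" "0 \<le> \<beta>n" "\<beta>n \<le> 1" "0 \<le> \<nu>" "\<nu> \<le> 1"
  shows "emeasure (measure_pmf (bias_step \<beta>p \<beta>n \<nu> p)) (Some ` {(x,a',y). Q x a' \<and> y \<and> a' = a0})
     = ennreal (if a0 then 1 else \<beta>p * (1 - \<nu>)) * indicator {(x,a',y). Q x a' \<and> y \<and> a' = a0} p"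
proof -
  obtain x a y where p: "p = (x,a,y)" by (cases p) auto
  have cn: "Collect Not = {False}" by auto
  show ?thesis
    using assms unfolding p bias_step_def
    by (auto simp: ennreal_mult indicator_def image_iff vimage_def cn emeasure_pmf_single mult.commute)
qed

lemma ne_lemma:
  assumes "0 < \<beta>p" "\<beta>p < 1" "0 < \<beta>n" "\<beta>n < 1" "0 < \<nu>" "\<nu> < 1"
  shows "set_pmf (bind_pmf D (bias_step \<beta>p \<beta>n \<nu>)) \<inter> {z. z \<noteq> None} \<noteq> {}"
proof -
  let ?M = "bind_pmf D (bias_step \<beta>p \<beta>n \<nu>)"
  have ex: "\<exists>z. Some z \<in> set_pmf (bias_step \<beta>p \<beta>n \<nu> p)" for p
  proof -
    obtain x a y where p: "p = (x,a,y)" by (cases p) auto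
    have "Some (x, a, if a then y else if y then False else y) \<in> set_pmf (bias_step \<beta>p \<beta>n \<nu> p)"
      using assms unfolding p bias_step_def
      by (cases a; cases y) (auto simp: set_bind_pmf)
    then show ?thesis by blast
  qed
  obtain p where "p \<in> set_pmf D" using set_pmf_not_empty[of D] by blast
  moreover obtain z where "Some z \<in> set_pmf (bias_step \<beta>p \<beta>n \<nu> p)" using ex by blast
  ultimately have "Some z \<in> set_pmf ?M \<inter> {z. z \<noteq> None}"
    by (auto simp: set_bind_pmf simp del: not_None_eq)
  then show "set_pmf ?M \<inter> {z. z \<noteq> None} \<noteq> {}" by blast
qed

lemma biased_measure:
  assumes "0 < \<beta>p" "\<beta>p < 1" "0 < \<beta>n" "\<beta>n < 1" "0 < \<nu>" "\<nu> < 1"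
  shows "measure_pmf.prob (biased \<beta>p \<beta>n \<nu> D) {(x,a',y). Q x a' \<and> y \<and> a' = b}
    = (if b then 1 else \<beta>p * (1 - \<nu>)) * measure_pmf.prob D {(x,a',y). Q x a' \<and> y \<and> a' = b}
      / measure_pmf.prob (bind_pmf D (bias_step \<beta>p \<beta>n \<nu>)) {z. z \<noteq> None}"
proof -
  let ?M = "bind_pmf D (bias_step \<beta>p \<beta>n \<nu>)"
  let ?S = "{(x,a',y). Q x a' \<and> y \<and> a' = b}"
  define c where "c = (if b then 1 else \<beta>p * (1 - \<nu>))"
  have c0: "0 \<le> c" using assms by (simp add: c_def)
  have ne: "set_pmf ?M \<inter> {z. z \<noteq> None} \<noteq> {}" by (rule ne_lemma[OF assms])
  have eq: "{z. z \<noteq> None} \<inter> the -` ?S = Some ` ?S" by auto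
  have "emeasure (measure_pmf ?M) (Some ` ?S) = (\<integral>\<^sup>+p. ennreal c * indicator ?S p \<partial>D)"
    using assms by (simp add: step_measure c_def)
  also have "\<dots> = ennreal c * emeasure (measure_pmf D) ?S"
    by (simp add: nn_integral_cmult_indicator)
  finally have "measure_pmf.prob ?M (Some ` ?S) = c * measure_pmf.prob D ?S"
    using c0 by (simp add: measure_pmf.emeasure_eq_measure ennreal_mult[symmetric])
  then show ?thesis
    unfolding biased_def measure_map_pmf cond_measure[OF ne] eq c_def by simp
qed

lemma Z_pos:
  assumes "0 < \<beta>p" "\<beta>p < 1" "0 < \<beta>n" "\<beta>n < 1" "0 < \<nu>" "\<nu> < 1"
  shows "measure_pmf.prob (bind_pmf D (bias_step \<beta>p \<beta>n \<nu>)) {z. z \<noteq> None} \<noteq> 0"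
  using measure_measure_pmf_not_zero[OF ne_lemma[OF assms]] by simp

lemma TPR_eq:
  assumes "0 < \<beta>p" "\<beta>p < 1" "0 < \<beta>n" "\<beta>n < 1" "0 < \<nu>" "\<nu> < 1"
  shows "TPR (biased \<beta>p \<beta>n \<nu> D) h a0 = TPR D h a0"
proof -
  have c: "(if a0 then 1 else \<beta>p * (1 - \<nu>)) \<noteq> 0" using assms by auto
  have Z: "measure_pmf.prob (bind_pmf D (bias_step \<beta>p \<beta>n \<nu>)) {z. z \<noteq> None} \<noteq> 0"
    using Z_pos[OF assms] .
  show ?thesis
    unfolding TPR_def
    using biased_measure[OF assms, where Q=h and b=a0 and D=D] biased_measure[OF assms, where Q="\<lambda>_ _. True" and b=a0 and D=D] c Z
    by simp
qed

theorem corollary3p6: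
  fixes D :: "('x \<times> bool \<times> bool) pmf"
    and H :: "('x \<Rightarrow> bool \<Rightarrow> bool) set"
    and \<beta>p \<beta>n \<nu> :: real
  assumes "0 < \<beta>p" "\<beta>p < 1" "0 < \<beta>n" "\<beta>n < 1" "0 < \<nu>" "\<nu> < 1"
  shows "(\<forall>h\<in>H. TPR (biased \<beta>p \<beta>n \<nu> D) h False = TPR D h False
               \<and> TPR (biased \<beta>p \<beta>n \<nu> D) h True = TPR D h True)
         \<and> H_fair_EO D H = H_fair_EO (biased \<beta>p \<beta>n \<nu> D) H"
  using TPR_eq[OF assms] unfolding H_fair_EO_def by auto

end
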